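(* Let $\Sigma=(I,X,\mathcal U,\phi,Y,h)$ be a forward complete control system with outputs. If $\Sigma$ is OUAG and OCEP, then it is OULS.
   Context: Let $I\in\{\mathbb N_0,\mathbb R_0^+\}$. A forward complete control system with outputs $\Sigma=(I,X,\mathcal U,\phi,Y,h)$ consists of: a normed space $(X,\|\cdot\|_X)$; a vector space $U$ and a normed linear subspace $(\mathcal U,\|\cdot\|_{\mathcal U})$ of $\{u:I\to U\}$ such that for all $u\in\mathcal U,\tau\in I$, $u(\cdot+\tau)\in\mathcal U$ with $\|u(\cdot+\tau)\|_{\mathcal U}\le\|u\|_{\mathcal U}$, and for $t_2\ge t_1\ge 0$ the function $u|_{[t_1,t_2]}$ ($u$ on $[t_1,t_2]$, $0$ elsewhere) lies in $\mathcal U$ with norm $\le\|u\|_{\mathcal U}$; a map $\phi:I\times X\times\mathcal U\to X$ with $\phi(0,x,u)=x$, causality, and cocycle property $\phi(t+s,x,u)=\phi(s,\phi(t,x,u),u(t+\cdot))$; a normed space $Y$ and $h:X\times U\to Y$. Write $y(t,x,u)=h(\phi(t,x,u),u(t))$, $B_r=\{x:\|x\|_X<r\}$, $B_{r,\mathcal U}=\{u:\|u\|_{\mathcal U}<r\}$; $\mathcal K_\infty$ = unbounded continuous strictly increasing functions $\mathbb R_0^+\to\mathbb R_0^+$ vanishing at $0$. OUAG: $\exists\gamma\in\mathcal K_\infty$ such that for all $\varepsilon,r,s>0$ there is $\tau\in I$ with $\|y(t,x,u)\|_Y\le\varepsilon+\gamma(\|u\|_{\mathcal U})$ for all $x\in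 B_r,u\in B_{s,\mathcal U},t\ge\tau$. OCEP: for every $\tau\in I,\varepsilon>0$ there is $\delta>0$ such that $t\in I$, $t\le\tau$, $\|x\|_X\le\delta$, $\|u\|_{\mathcal U}\le\delta$ imply $\|y(t,x,u)\|_Y\le\varepsilon$. OULS: $\exists r>0,\sigma,\gamma\in\mathcal K_\infty$ with $\|y(t,x,u)\|_Y\le\sigma(\|x\|_X)+\gamma(\|u\|_{\mathcal U})$ for all $x\in B_r,u\in B_{r,\mathcal U},t\in I$ (equivalently: for every $\varepsilon>0$ there is $\delta>0$ such that $\|x\|_X\le\delta$, $\|u\|_{\mathcal U}\le\delta$ imply $\|y(t,x,u)\|_Y\le\varepsilon$ for all $t\in I$). *)

theory Defs
  imports "HOL-Analysis.Analysis"
begin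

text \<open>Time set I is encoded as a set of reals T, which is either the
  nonnegative integers (as reals) or the nonnegative reals.
  Inputs are functions real => 'u that vanish outside T.\<close>

definition time_set :: "real set \<Rightarrow> bool" where
  "time_set T \<longleftrightarrow> T = range real \<or> T = {0..}"

definition shift_input :: "real set \<Rightarrow> (real \<Rightarrow> 'u::real_vector) \<Rightarrow> real \<Rightarrow> real \<Rightarrow> 'u" where
  "shift_input T u \<tau> = (\<lambda>t. if t \<in> T then u (t + \<tau>) else 0)"

definition restrict_input :: "(real \<Rightarrow> 'u::real_vector) \<Rightarrow> real \<Rightarrow> real \<Rightarrow> real \<Rightarrow> 'u" where
  "restrict_input u t1 t2 = (\<lambda>t. if t1 \<le> t \<and> t \<le> t2 then u t else 0)"

definition sys_output :: "(real \<Rightarrow> 'x \<Rightarrow> (real \<Rightarrow> 'u) \<Rightarrow> 'x) \<Rightarrow> ('x \<Rightarrow> 'u \<Rightarrow> 'y)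
    \<Rightarrow> real \<Rightarrow> 'x \<Rightarrow> (real \<Rightarrow> 'u) \<Rightarrow> 'y" where
  "sys_output phi h t x u = h (phi t x u) (u t)"

text \<open>Forward complete control system with outputs (I, X, U, phi, Y, h):
  X is the type 'x, Y the type 'y, U the type 'u; the input space is the set
  Us with norm nU.\<close>

definition control_system ::
  "real set \<Rightarrow> (real \<Rightarrow> 'u::real_vector) set \<Rightarrow> ((real \<Rightarrow> 'u) \<Rightarrow> real)
    \<Rightarrow> (real \<Rightarrow> 'x::real_normed_vector \<Rightarrow> (real \<Rightarrow> 'u) \<Rightarrow> 'x)
    \<Rightarrow> ('x \<Rightarrow> 'u \<Rightarrow> 'y::real_normed_vector) \<Rightarrow> bool" where
  "control_system T Us nU phi h \<longleftrightarrow>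
     time_set T \<and>
     \<comment> \<open>inputs are functions on T (zero outside T)\<close>
     (\<forall>u\<in>Us. \<forall>t. t \<notin> T \<longrightarrow> u t = 0) \<and>
     \<comment> \<open>linear subspace\<close>
     (\<lambda>t. 0) \<in> Us \<and>
     (\<forall>u\<in>Us. \<forall>v\<in>Us. (\<lambda>t. u t + v t) \<in> Us) \<and>
     (\<forall>u\<in>Us. \<forall>c::real. (\<lambda>t. c *\<^sub>R u t) \<in> Us) \<and>
     \<comment> \<open>nU is a norm on Us\<close>
     (\<forall>u\<in>Us. nU u \<ge> 0) \<and>
     (\<forall>u\<in>Us. nU u = 0 \<longleftrightarrow> u = (\<lambda>t. 0)) \<and>
     (\<forall>u\<in>Us. \<forall>c::real. nU (\<lambda>t. c *\<^sub>R u t) = \<bar>c\<bar> * nU u) \<and>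
     (\<forall>u\<in>Us. \<forall>v\<in>Us. nU (\<lambda>t. u t + v t) \<le> nU u + nU v) \<and>
     \<comment> \<open>shift axiom\<close>
     (\<forall>u\<in>Us. \<forall>\<tau>\<in>T. shift_input T u \<tau> \<in> Us \<and> nU (shift_input T u \<tau>) \<le> nU u) \<and>
     \<comment> \<open>restriction axiom\<close>
     (\<forall>u\<in>Us. \<forall>t1\<in>T. \<forall>t2\<in>T. t1 \<le> t2 \<longrightarrow>
         restrict_input u t1 t2 \<in> Us \<and> nU (restrict_input u t1 t2) \<le> nU u) \<and>
     \<comment> \<open>identity property\<close>
     (\<forall>x. \<forall>u\<in>Us. phi 0 x u = x) \<and>
     \<comment> \<open>causality\<close>
     (\<forall>t\<in>T. \<forall>x. \<forall>u\<in>Us. \<forall>v\<in>Us. (\<forall>s\<in>T. s \<le> t \<longrightarrow> u s = v s) \<longrightarrow>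
         phi t x u = phi t x v) \<and>
     \<comment> \<open>cocycle property\<close>
     (\<forall>t\<in>T. \<forall>s\<in>T. \<forall>x. \<forall>u\<in>Us.
         phi (t + s) x u = phi s (phi t x u) (shift_input T u t))"

definition Kinf :: "(real \<Rightarrow> real) \<Rightarrow> bool" where
  "Kinf f \<longleftrightarrow> continuous_on {0..} f \<and> strict_mono_on {0..} f \<and> f 0 = 0 \<and>
     (\<forall>M. \<exists>r\<ge>0. f r > M)"

definition OUAG where
  "OUAG T Us nU phi h \<longleftrightarrow>
    (\<exists>\<gamma>. Kinf \<gamma> \<and> (\<forall>\<epsilon>>0. \<forall>r>0. \<forall>s>0. \<exists>\<tau>\<in>T. \<forall>x u t.
        norm x < r \<and> u \<in> Us \<and> nU u < s \<and> t \<in> T \<and> t \<ge> \<tau> \<longrightarrow>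
        norm (sys_output phi h t x u) \<le> \<epsilon> + \<gamma> (nU u)))"

definition OCEP where
  "OCEP T Us nU phi h \<longleftrightarrow>
    (\<forall>\<tau>\<in>T. \<forall>\<epsilon>>0. \<exists>\<delta>>0. \<forall>t x u.
        t \<in> T \<and> t \<le> \<tau> \<and> norm x \<le> \<delta> \<and> u \<in> Us \<and> nU u \<le> \<delta> \<longrightarrow>
        norm (sys_output phi h t x u) \<le> \<epsilon>)"

definition OULS where
  "OULS T Us nU phi h \<longleftrightarrow>
    (\<exists>r>0. \<exists>\<sigma> \<gamma>. Kinf \<sigma> \<and> Kinf \<gamma> \<and> (\<forall>x u t.
        norm x < r \<and> u \<in> Us \<and> nU u < r \<and> t \<in> T \<longrightarrow>
        norm (sys_output phi h t x u) \<le> \<sigma> (norm x) + \<gamma> (nU u)))"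

end

theory Submission imports Defs begin

definition ramp :: "(nat \<Rightarrow> real) \<Rightarrow> nat \<Rightarrow> real \<Rightarrow> real" where
  "ramp e k a = min 1 (max 0 ((a - e (Suc (Suc k))) / (e (Suc k) - e (Suc (Suc k)))))"

definition Sg :: "(nat \<Rightarrow> real) \<Rightarrow> real \<Rightarrow> real" where
  "Sg e a = a + (\<Sum>k. (1/2)^k * ramp e k a)"

lemma ramp_bounds: "0 \<le> ramp e k a" "ramp e k a \<le> 1"
  by (auto simp: ramp_def)

lemma ramp_summable: "summable (\<lambda>k. (1/2::real)^k * ramp e k a)"
proof (rule summable_comparison_test[where g="\<lambda>k. (1/2::real)^k"])
  show "\<exists>N. \<forall>n\<ge>N. norm ((1/2::real)^n * ramp e n a) \<le> (1/2)^n"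
    using ramp_bounds[of e] by (auto intro!: mult_left_le_one_le simp: abs_mult)
qed (simp add: summable_geometric)

lemma ramp_mono:
  assumes dec: "\<And>k. e (Suc k) < e k" and "a \<le> b"
  shows "ramp e k a \<le> ramp e k b"
proof -
  have "e (Suc (Suc k)) < e (Suc k)" using dec by blast
  then have "(a - e (Suc (Suc k))) / (e (Suc k) - e (Suc (Suc k))) \<le> (b - e (Suc (Suc k))) / (e (Suc k) - e (Suc (Suc k)))"
    using assms(2) by (intro divide_right_mono) auto
  then show ?thesis unfolding ramp_def by linarith
qed

lemma ramp_cont:
  assumes dec: "\<And>k. e (Suc k) < e k"
  shows "continuous_on A (ramp e k)"
proof -
  have "e (Suc (Suc k)) < e (Suc k)" using dec by blast
  then show ?thesis unfolding ramp_def
    by (intro continuous_intros) auto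
qed

lemma Sg_Kinf:
  assumes dec: "\<And>k. e (Suc k) < e k" and pos: "\<And>k. e k > 0"
  shows "Kinf (Sg e)"
proof -
  have cs: "continuous_on {0..} (\<lambda>a. \<Sum>k. (1/2::real)^k * ramp e k a)"
  proof (rule uniform_limit_theorem)
    show "uniform_limit {0..} (\<lambda>n a. \<Sum>i<n. (1/2::real)^i * ramp e i a) (\<lambda>a. \<Sum>k. (1/2::real)^k * ramp e k a) sequentially"
      apply (rule Weierstrass_m_test[where M="\<lambda>k. (1/2::real)^k"])
      using ramp_bounds[of e] by (auto intro!: mult_left_le_one_le simp: abs_mult summable_geometric)
    show "\<forall>\<^sub>F n in sequentially. continuous_on {0..} (\<lambda>a. \<Sum>i<n. (1/2::real)^i * ramp e i a)"
      by (intro always_eventually allI continuous_intros ramp_cont dec)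
  qed simp
  have mono: "(\<Sum>k. (1/2::real)^k * ramp e k a) \<le> (\<Sum>k. (1/2::real)^k * ramp e k b)" if "a \<le> b" for a b
    by (intro suminf_le ramp_summable mult_left_mono ramp_mono dec that) auto
  have z: "ramp e k 0 = 0" for k
  proof -
    have "e (Suc (Suc k)) < e (Suc k)" "e (Suc (Suc k)) > 0" using dec pos by blast+
    then have "(0 - e (Suc (Suc k))) / (e (Suc k) - e (Suc (Suc k))) < 0"
      by (intro divide_neg_pos) auto
    then show ?thesis unfolding ramp_def by simp
  qed
  show ?thesis unfolding Kinf_def
  proof (intro conjI allI)
    show "continuous_on {0..} (Sg e)" unfolding Sg_def
      by (intro continuous_intros cs)
    show "strict_mono_on {0..} (Sg e)" unfolding Sg_def
    proof (rule strict_mono_onI)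
      fix r s :: real assume "r < s"
      then show "r + (\<Sum>k. (1/2::real)^k * ramp e k r) < s + (\<Sum>k. (1/2::real)^k * ramp e k s)"
        using mono[of r s] by linarith
    qed
    show "Sg e 0 = 0" unfolding Sg_def by (simp add: z)
    fix M :: real
    have "Sg e (max 0 (M+1)) \<ge> max 0 (M+1)" unfolding Sg_def
      by (simp add: suminf_nonneg ramp_summable ramp_bounds)
    then show "\<exists>r\<ge>0. M < Sg e r" by (intro exI[of _ "max 0 (M+1)"]) auto
  qed
qed

lemma Sg_nonneg: "a \<ge> 0 \<Longrightarrow> Sg e a \<ge> 0"
  unfolding Sg_def by (simp add: suminf_nonneg ramp_summable ramp_bounds)

lemma Sg_ge:
  assumes dec: "\<And>k. e (Suc k) < e k" and "a \<ge> 0" and "a > e (Suc m)"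
  shows "Sg e a \<ge> (1/2)^m"
proof -
  have "e (Suc (Suc m)) < e (Suc m)" using dec by blast
  then have "ramp e m a = 1" unfolding ramp_def using assms(3) by (simp add: field_simps)
  then have "(1/2::real)^m = (1/2)^m * ramp e m a" by simp
  also have "\<dots> \<le> (\<Sum>k. (1/2::real)^k * ramp e k a)"
    using sum_le_suminf[OF ramp_summable[of e a], of "{m}"] by (auto simp: ramp_bounds)
  finally show ?thesis unfolding Sg_def using assms(2) by simp
qed

fun mk :: "(nat \<Rightarrow> real) \<Rightarrow> nat \<Rightarrow> real" where
  "mk d 0 = d 0"
| "mk d (Suc n) = min (d (Suc n)) (mk d n / 2)"

lemma mk_pos: "(\<And>n. d n > 0) \<Longrightarrow> mk d n > 0"
  by (induction n) auto

lemma mk_dec: "(\<And>n. d n > 0) \<Longrightarrow> mk d (Suc n) < mk d n"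
  using mk_pos[of d n] by auto

lemma mk_le: "mk d n \<le> d n"
  by (cases n) auto

lemma mk_half: "mk d n \<le> d 0 / 2^n"
proof (induction n)
  case (Suc n)
  have "mk d (Suc n) \<le> mk d n / 2" by simp
  also have "\<dots> \<le> d 0 / 2^n / 2" using Suc by (intro divide_right_mono) auto
  finally show ?case by simp
qed simp

lemma mk_small:
  assumes "\<And>n. d n > 0" "a > 0"
  shows "\<exists>n. mk d n < a"
proof -
  obtain n where "d 0 / a < 2^n" using real_arch_pow[of 2 "d 0 / a"] by auto
  then have "d 0 / 2^n < a" using assms(2) by (simp add: field_simps)
  then show ?thesis using mk_half[of d n] by (intro exI[of _ n]) linarith
qed

theorem lemma6:
  fixes T :: "real set" and Us :: "(real \<Rightarrow> 'u::real_vector) set"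
    and nU :: "(real \<Rightarrow> 'u) \<Rightarrow> real"
    and phi :: "real \<Rightarrow> 'x::real_normed_vector \<Rightarrow> (real \<Rightarrow> 'u) \<Rightarrow> 'x"
    and h :: "'x \<Rightarrow> 'u \<Rightarrow> 'y::real_normed_vector"
  assumes "control_system T Us nU phi h"
    and "OUAG T Us nU phi h"
    and "OCEP T Us nU phi h"
  shows "OULS T Us nU phi h"
proof -
  note cs = assms(1)[unfolded control_system_def]
  have nUpos: "\<And>u. u \<in> Us \<Longrightarrow> nU u \<ge> 0"
    using cs[THEN conjunct2, THEN conjunct2, THEN conjunct2, THEN conjunct2, THEN conjunct2, THEN conjunct1] by blast
  from assms(2) obtain \<gamma> where gK: "Kinf \<gamma>" and gA: "\<forall>\<epsilon>>0. \<forall>r>0. \<forall>s>0. \<exists>\<tau>\<in>T. \<forall>x u t.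
        norm x < r \<and> u \<in> Us \<and> nU u < s \<and> t \<in> T \<and> t \<ge> \<tau> \<longrightarrow>
        norm (sys_output phi h t x u) \<le> \<epsilon> + \<gamma> (nU u)"
    unfolding OUAG_def by blast
  have E: "\<exists>\<delta>>0. \<forall>t x u. norm x \<le> \<delta> \<and> u \<in> Us \<and> nU u \<le> \<delta> \<and> t \<in> T \<longrightarrow>
      norm (sys_output phi h t x u) \<le> \<epsilon>" if "\<epsilon> > 0" for \<epsilon>
  proof -
    have half: "\<epsilon>/2 > 0" using that by simp
    obtain \<tau> where "\<tau> \<in> T" and \<tau>: "\<forall>x u t.
        norm x < 1 \<and> u \<in> Us \<and> nU u < 1 \<and> t \<in> T \<and> t \<ge> \<tau> \<longrightarrow>
        norm (sys_output phi h t x u) \<le> \<epsilon>/2 + \<gamma> (nU u)"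
      using gA[rule_format, OF half zero_less_one zero_less_one] by blast
    from assms(3) \<open>\<tau> \<in> T\<close> that obtain \<delta>1 where "\<delta>1 > 0" and d1: "\<forall>t x u.
        t \<in> T \<and> t \<le> \<tau> \<and> norm x \<le> \<delta>1 \<and> u \<in> Us \<and> nU u \<le> \<delta>1 \<longrightarrow>
        norm (sys_output phi h t x u) \<le> \<epsilon>" unfolding OCEP_def by blast
    have gc: "continuous_on {0..} \<gamma>" and g0: "\<gamma> 0 = 0" using gK unfolding Kinf_def by auto
    then obtain \<delta>2 where "\<delta>2 > 0" and d2: "\<And>v. v \<in> {0..} \<Longrightarrow> dist v 0 < \<delta>2 \<Longrightarrow> dist (\<gamma> v) (\<gamma> 0) < \<epsilon>/2"
      using gc[unfolded continuous_on_iff, rule_format, of 0 "\<epsilon>/2"] half by auto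
    define \<delta> where "\<delta> = min \<delta>1 (min (\<delta>2/2) (1/2))"
    have "\<delta> > 0" using \<open>\<delta>1 > 0\<close> \<open>\<delta>2 > 0\<close> by (simp add: \<delta>_def)
    moreover have "norm (sys_output phi h t x u) \<le> \<epsilon>"
      if "norm x \<le> \<delta>" "u \<in> Us" "nU u \<le> \<delta>" "t \<in> T" for t x u
    proof (cases "t \<le> \<tau>")
      case True then show ?thesis using d1 that by (auto simp: \<delta>_def)
    next
      case False
      have "0 \<le> nU u" using nUpos that by blast
      then have "\<gamma> (nU u) < \<epsilon>/2" using d2[of "nU u"] that g0 \<open>\<delta>2 > 0\<close> by (auto simp: \<delta>_def)
      moreover have "norm (sys_output phi h t x u) \<le> \<epsilon>/2 + \<gamma> (nU u)"
        using \<tau> that False by (auto simp: \<delta>_def)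
      ultimately show ?thesis by linarith
    qed
    ultimately show ?thesis by blast
  qed
  have "\<forall>n. \<exists>\<delta>>0. \<forall>t x u. norm x \<le> \<delta> \<and> u \<in> Us \<and> nU u \<le> \<delta> \<and> t \<in> T \<longrightarrow>
      norm (sys_output phi h t x u) \<le> (1/2)^n"
    using E by simp
  then have "\<exists>d. \<forall>n. d n > 0 \<and> (\<forall>t x u. norm x \<le> d n \<and> u \<in> Us \<and> nU u \<le> d n \<and> t \<in> T \<longrightarrow>
      norm (sys_output phi h t x u) \<le> (1/2)^n)"
    by (rule choice)
  then obtain d where dd: "\<forall>n. d n > 0 \<and> (\<forall>t x u. norm x \<le> d n \<and> u \<in> Us \<and> nU u \<le> d n \<and> t \<in> T \<longrightarrow>
      norm (sys_output phi h t x u) \<le> (1/2)^n)" by blast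
  have dpos: "\<And>n. d n > 0" using dd by blast
  have dP: "\<And>n t x u. norm x \<le> d n \<Longrightarrow> u \<in> Us \<Longrightarrow> nU u \<le> d n \<Longrightarrow> t \<in> T \<Longrightarrow>
      norm (sys_output phi h t x u) \<le> (1/2)^n"
    using dd by blast
  define e where "e = mk d"
  have epos: "\<And>n. e n > 0" unfolding e_def using dpos by (rule mk_pos)
  have edec: "\<And>n. e (Suc n) < e n" unfolding e_def using dpos by (rule mk_dec)
  have eled: "\<And>n. e n \<le> d n" unfolding e_def by (rule mk_le)
  have etend: "\<exists>n. e n < a" if "a > 0" for a
    unfolding e_def using dpos that by (rule mk_small)
  have bound: "norm (sys_output phi h t x u) \<le> Sg e (norm x) + Sg e (nU u)"
    if "norm x < e 0" "u \<in> Us" "nU u < e 0" "t \<in> T" for x u t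
  proof -
    define a where "a = max (norm x) (nU u)"
    have "0 \<le> nU u" using nUpos that by blast
    have Sa: "Sg e a \<le> Sg e (norm x) + Sg e (nU u)"
      using Sg_nonneg[of "norm x" e] Sg_nonneg[of "nU u" e] \<open>0 \<le> nU u\<close> by (auto simp: a_def max_def)
    show ?thesis
    proof (cases "a = 0")
      case True
      have "norm (sys_output phi h t x u) \<le> 0"
      proof (rule ccontr)
        assume "\<not> ?thesis"
        define Y where "Y = norm (sys_output phi h t x u)"
        have p: "Y / 2 > 0" using \<open>\<not> _\<close> by (simp add: Y_def)
        obtain \<delta> where "\<delta> > 0" and dl: "\<forall>t' x' u'. norm x' \<le> \<delta> \<and> u' \<in> Us \<and> nU u' \<le> \<delta> \<and> t' \<in> T \<longrightarrow>
          norm (sys_output phi h t' x' u') \<le> Y / 2" using E[OF p] by blast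
        have "norm x \<le> \<delta>" "nU u \<le> \<delta>" using True \<open>\<delta> > 0\<close> \<open>0 \<le> nU u\<close> by (auto simp: a_def max_def split: if_splits)
        then have "Y \<le> Y / 2" using dl that(2,4) unfolding Y_def by blast
        then show False using p by linarith
      qed
      moreover have "0 \<le> Sg e (norm x) + Sg e (nU u)"
        using Sg_nonneg[of "norm x" e] Sg_nonneg[of "nU u" e] \<open>0 \<le> nU u\<close> by simp
      ultimately show ?thesis by linarith
    next
      case False
      then have "a > 0" using \<open>0 \<le> nU u\<close> by (auto simp: a_def max_def)
      define n where "n = (LEAST n. e n < a)"
      have en: "e n < a" unfolding n_def using etend[OF \<open>a > 0\<close>] by (rule LeastI_ex)
      have "n \<noteq> 0"
      proof
        assume "n = 0" then show False using en that(1,3) by (simp add: a_def)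
      qed
      then obtain m where m: "n = Suc m" using not0_implies_Suc by blast
      have "\<not> e m < a" using not_less_Least[of m "\<lambda>n. e n < a"] m n_def by auto
      then have "norm (sys_output phi h t x u) \<le> (1/2)^m"
        using dP[of x m u t] eled[of m] that by (auto simp: a_def)
      also have "\<dots> \<le> Sg e a" using Sg_ge[of e a m, OF edec] en m \<open>a > 0\<close> by simp
      finally show ?thesis using Sa by linarith
    qed
  qed
  show ?thesis unfolding OULS_def
  proof (intro exI conjI allI impI)
    show "0 < e 0" by (rule epos)
    show "Kinf (Sg e)" by (rule Sg_Kinf[of e, OF edec epos])
    show "Kinf (Sg e)" by (rule Sg_Kinf[of e, OF edec epos])
    fix x :: 'x and u t assume "norm x < e 0 \<and> u \<in> Us \<and> nU u < e 0 \<and> t \<in> T"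
    then show "norm (sys_output phi h t x u) \<le> Sg e (norm x) + Sg e (nU u)"
      using bound by blast
  qed
qed

end
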